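(* Let $p$ be a prime and $G_p^{rf}=\mathbb{Z}_{p^{r_1}}\oplus\mathbb{Z}_{p^{r_2}}\oplus\cdots\oplus\mathbb{Z}_{p^{r_k}}$ with $1\le r_1<r_2<\cdots<r_k$. Set $n_i=r_{i+1}-r_i$ for $1\le i\le k-1$. Then the number of orbits of the automorphism group $\mathrm{Aut}(G_p^{rf})$ acting on the elements of $G_p^{rf}$ is $$(r_1+1)(n_1+1)(n_2+1)\cdots(n_{k-1}+1).$$ *)

theory Defs
  imports "HOL-Algebra.Bij" "HOL-Computational_Algebra.Primes"
begin

text \<open>The finite abelian p-group Z_{p^{r_1}} + ... + Z_{p^{r_k}}, with the exponents
  given as a list rs = [r_1, ..., r_k].\<close>

definition Gpr :: "nat \<Rightarrow> nat list \<Rightarrow> nat list monoid" where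
  "Gpr p rs = \<lparr> carrier = {x. length x = length rs \<and> (\<forall>i<length rs. x ! i < p ^ (rs ! i))},
     monoid.mult = (\<lambda>x y. map (\<lambda>i. (x ! i + y ! i) mod p ^ (rs ! i)) [0..<length rs]),
     monoid.one = replicate (length rs) 0 \<rparr>"

definition aut_orbit :: "('a, 'b) monoid_scheme \<Rightarrow> 'a \<Rightarrow> 'a set" where
  "aut_orbit G x = {f x | f. f \<in> auto G}"

definition aut_orbits :: "('a, 'b) monoid_scheme \<Rightarrow> 'a set set" where
  "aut_orbits G = aut_orbit G ` carrier G"

end

theory Submission
  imports Defs
begin

lemma Gpr_carrier: "carrier (Gpr p rs) = {x. length x = length rs \<and> (\<forall>i<length rs. x ! i < p ^ (rs ! i))}"
  by (simp add: Gpr_def)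
lemma Gpr_mult: "x \<otimes>\<^bsub>Gpr p rs\<^esub> y = map (\<lambda>i. (x ! i + y ! i) mod p ^ (rs ! i)) [0..<length rs]"
  by (simp add: Gpr_def)
lemma Gpr_one: "\<one>\<^bsub>Gpr p rs\<^esub> = replicate (length rs) 0"
  by (simp add: Gpr_def)

lemma Gpr_mult_closed:
  assumes "0 < p" "x \<in> carrier (Gpr p rs)" "y \<in> carrier (Gpr p rs)"
  shows "x \<otimes>\<^bsub>Gpr p rs\<^esub> y \<in> carrier (Gpr p rs)"
  using assms by (auto simp: Gpr_carrier Gpr_mult)

lemma Gpr_one_closed: "0 < p \<Longrightarrow> \<one>\<^bsub>Gpr p rs\<^esub> \<in> carrier (Gpr p rs)"
  by (auto simp: Gpr_carrier Gpr_one)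

lemma Gpr_finite: "finite (carrier (Gpr p rs))"
proof -
  let ?B = "\<Sum>i<length rs. p ^ (rs ! i)"
  have "carrier (Gpr p rs) \<subseteq> {xs. set xs \<subseteq> {..<?B} \<and> length xs = length rs}"
  proof
    fix x assume "x \<in> carrier (Gpr p rs)"
    then have x: "length x = length rs" "\<And>i. i<length rs \<Longrightarrow> x ! i < p ^ (rs ! i)"
      by (auto simp: Gpr_carrier)
    have "x ! i < ?B" if "i < length rs" for i
    proof -
      have "p ^ (rs ! i) \<le> ?B" using that by (intro member_le_sum) auto
      with x(2)[OF that] show ?thesis by linarith
    qed
    then show "x \<in> {xs. set xs \<subseteq> {..<?B} \<and> length xs = length rs}"
      using x by (auto simp: in_set_conv_nth)
  qed
  then show ?thesis by (rule finite_subset) (rule finite_lists_length_eq, simp)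
qed

lemma id_auto: "0 < p \<Longrightarrow> (\<lambda>x\<in>carrier (Gpr p rs). x) \<in> auto (Gpr p rs)"
  by (simp add: auto_def hom_def id_Bij Gpr_mult_closed)

lemma auto_compose:
  assumes "0 < p" "f \<in> auto G" "g \<in> auto G" and G: "G = Gpr p rs"
  shows "compose (carrier G) g f \<in> auto G"
proof -
  have "g \<circ> f \<in> hom G G" using assms(2,3) unfolding auto_def by (intro hom_compose) auto
  then have "compose (carrier G) g f \<in> hom G G"
    using Gpr_mult_closed[OF assms(1)] unfolding G
    by (auto simp: hom_def compose_def)
  moreover have "compose (carrier G) g f \<in> Bij (carrier G)"
    using assms(2,3) unfolding auto_def by (intro compose_Bij) auto
  ultimately show ?thesis unfolding auto_def by blast
qed

lemma auto_inv:
  assumes "0 < p" "f \<in> auto (Gpr p rs)"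
  shows "restrict (inv_into (carrier (Gpr p rs)) f) (carrier (Gpr p rs)) \<in> auto (Gpr p rs)"
proof -
  let ?G = "Gpr p rs"
  have f: "f \<in> hom ?G ?G" "f \<in> Bij (carrier ?G)" using assms(2) unfolding auto_def by blast+
  have mc: "monoid.mult ?G \<in> carrier ?G \<rightarrow> carrier ?G \<rightarrow> carrier ?G"
    by (intro Pi_I Gpr_mult_closed[OF assms(1)])
  have im: "inv_into (carrier ?G) f x \<in> carrier ?G" if "x \<in> carrier ?G" for x
    using Bij_inv_into_mem[OF f(2) that] .
  have hm: "inv_into (carrier ?G) f (x \<otimes>\<^bsub>?G\<^esub> y) = inv_into (carrier ?G) f x \<otimes>\<^bsub>?G\<^esub> inv_into (carrier ?G) f y"
    if "x \<in> carrier ?G" "y \<in> carrier ?G" for x y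
  proof (rule Bij_inv_into_lemma[OF _ f(2) mc that])
    fix x y assume "x \<in> carrier ?G" "y \<in> carrier ?G"
    then show "f (x \<otimes>\<^bsub>?G\<^esub> y) = f x \<otimes>\<^bsub>?G\<^esub> f y" using f(1) unfolding hom_def by blast
  qed
  have "restrict (inv_into (carrier ?G) f) (carrier ?G) \<in> hom ?G ?G"
    unfolding hom_def
  proof (intro CollectI conjI ballI)
    show "restrict (inv_into (carrier ?G) f) (carrier ?G) \<in> carrier ?G \<rightarrow> carrier ?G"
      using im by auto
    fix x y assume xy: "x \<in> carrier ?G" "y \<in> carrier ?G"
    then have "x \<otimes>\<^bsub>?G\<^esub> y \<in> carrier ?G" using Gpr_mult_closed[OF assms(1)] by blast
    then show "restrict (inv_into (carrier ?G) f) (carrier ?G) (x \<otimes>\<^bsub>?G\<^esub> y) =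
        restrict (inv_into (carrier ?G) f) (carrier ?G) x \<otimes>\<^bsub>?G\<^esub> restrict (inv_into (carrier ?G) f) (carrier ?G) y"
      using xy hm by simp
  qed
  then show ?thesis unfolding auto_def using restrict_inv_into_Bij[OF f(2)] by blast
qed

lemma orbit_memI: "f \<in> auto G \<Longrightarrow> y = f x \<Longrightarrow> y \<in> aut_orbit G x"
  unfolding aut_orbit_def by auto

lemma orbit_memE: "y \<in> aut_orbit G x \<Longrightarrow> (\<And>f. f \<in> auto G \<Longrightarrow> y = f x \<Longrightarrow> P) \<Longrightarrow> P"
  unfolding aut_orbit_def by auto

lemma auto_bij: "f \<in> auto G \<Longrightarrow> bij_betw f (carrier G) (carrier G)"
  unfolding auto_def Bij_def by (drule IntD2, drule IntD2) simp

lemma orbit_eq: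
  assumes "0 < p" "f \<in> auto (Gpr p rs)" "x \<in> carrier (Gpr p rs)"
  shows "aut_orbit (Gpr p rs) (f x) = aut_orbit (Gpr p rs) x"
proof -
  let ?G = "Gpr p rs" let ?C = "carrier (Gpr p rs)"
  have bij: "bij_betw f ?C ?C" using auto_bij[OF assms(2)] .
  have fx: "f x \<in> ?C" using bij_betw_apply[OF bij assms(3)] .
  let ?fi = "restrict (inv_into ?C f) ?C"
  have fi: "?fi \<in> auto ?G" by (rule auto_inv[OF assms(1,2)])
  have ii: "inv_into ?C f (f x) = x" using inv_into_f_f[OF bij_betw_imp_inj_on[OF bij] assms(3)] .
  have fif: "?fi (f x) = x" unfolding restrict_apply'[OF fx] by (rule ii)
  show ?thesis
  proof (rule equalityI; rule subsetI)
    fix y assume "y \<in> aut_orbit ?G (f x)"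
    then obtain g where g: "g \<in> auto ?G" and gy: "y = g (f x)" by (rule orbit_memE)
    have c: "compose ?C g f x = g (f x)" unfolding compose_def restrict_apply'[OF assms(3)] ..
    show "y \<in> aut_orbit ?G x"
      by (rule orbit_memI[OF auto_compose[OF assms(1) assms(2) g refl]]) (simp only: c gy)
  next
    fix y assume "y \<in> aut_orbit ?G x"
    then obtain g where g: "g \<in> auto ?G" and gy: "y = g x" by (rule orbit_memE)
    have c: "compose ?C g ?fi (f x) = g x" unfolding compose_def restrict_apply'[OF fx] ii ..
    show "y \<in> aut_orbit ?G (f x)"
      by (rule orbit_memI[OF auto_compose[OF assms(1) fi g refl]]) (simp only: c gy)
  qed
qed

definition mmap :: "nat \<Rightarrow> nat list \<Rightarrow> (nat \<Rightarrow> nat \<Rightarrow> nat) \<Rightarrow> nat list \<Rightarrow> nat list" where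
  "mmap p rs m y = map (\<lambda>i. (\<Sum>j<length rs. m i j * y ! j) mod p ^ (rs ! i)) [0..<length rs]"

lemma mod_transfer:
  fixes q m r a :: nat
  assumes "q dvd m * r"
  shows "(m * (a mod r)) mod q = (m * a) mod q"
proof -
  obtain c where c: "m * r = q * c" using assms by blast
  have "a = a mod r + r * (a div r)" by simp
  then have "m * a = m * (a mod r) + (m * r) * (a div r)"
    by (metis distrib_left mult.assoc)
  also have "\<dots> = m * (a mod r) + q * (c * (a div r))" by (simp add: c mult.assoc)
  finally show ?thesis by simp
qed

lemma mmap_carrier: "0 < p \<Longrightarrow> mmap p rs m y \<in> carrier (Gpr p rs)"
  by (simp add: mmap_def Gpr_carrier)

lemma mmap_mult:
  assumes "0 < p"
    and D: "\<And>i j. i < length rs \<Longrightarrow> j < length rs \<Longrightarrow> p ^ (rs ! i) dvd m i j * p ^ (rs ! j)"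
    and x: "x \<in> carrier (Gpr p rs)" and y: "y \<in> carrier (Gpr p rs)"
  shows "mmap p rs m (x \<otimes>\<^bsub>Gpr p rs\<^esub> y) = mmap p rs m x \<otimes>\<^bsub>Gpr p rs\<^esub> mmap p rs m y"
proof (rule nth_equalityI)
  show "length (mmap p rs m (x \<otimes>\<^bsub>Gpr p rs\<^esub> y)) = length (mmap p rs m x \<otimes>\<^bsub>Gpr p rs\<^esub> mmap p rs m y)"
    by (simp add: mmap_def Gpr_mult)
  fix i assume "i < length (mmap p rs m (x \<otimes>\<^bsub>Gpr p rs\<^esub> y))"
  then have i: "i < length rs" by (simp add: mmap_def)
  let ?k = "length rs" let ?q = "\<lambda>i. p ^ (rs ! i)"
  have "(\<Sum>j<?k. m i j * ((x ! j + y ! j) mod ?q j)) mod ?q i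
      = (\<Sum>j<?k. (m i j * ((x ! j + y ! j) mod ?q j)) mod ?q i) mod ?q i"
    by (simp add: mod_sum_eq)
  also have "\<dots> = (\<Sum>j<?k. (m i j * (x ! j + y ! j)) mod ?q i) mod ?q i"
  proof (rule arg_cong[where f="\<lambda>t. t mod ?q i"], rule sum.cong[OF refl])
    fix j assume "j \<in> {..<?k}"
    then have j: "j < ?k" by simp
    show "m i j * ((x ! j + y ! j) mod ?q j) mod ?q i = m i j * (x ! j + y ! j) mod ?q i"
      by (rule mod_transfer[OF D[OF i j]])
  qed
  also have "\<dots> = (\<Sum>j<?k. m i j * (x ! j + y ! j)) mod ?q i"
    by (simp add: mod_sum_eq)
  also have "\<dots> = ((\<Sum>j<?k. m i j * x ! j) + (\<Sum>j<?k. m i j * y ! j)) mod ?q i"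
    by (simp add: distrib_left sum.distrib)
  also have "\<dots> = ((\<Sum>j<?k. m i j * x ! j) mod ?q i + (\<Sum>j<?k. m i j * y ! j) mod ?q i) mod ?q i"
    by (simp add: mod_add_eq)
  finally show "mmap p rs m (x \<otimes>\<^bsub>Gpr p rs\<^esub> y) ! i = (mmap p rs m x \<otimes>\<^bsub>Gpr p rs\<^esub> mmap p rs m y) ! i"
    using i by (simp add: mmap_def Gpr_mult)
qed

lemma mmap_inj:
  assumes p: "prime p" and s: "sorted_wrt (<) rs"
    and D: "\<And>i j. i < length rs \<Longrightarrow> j < length rs \<Longrightarrow> p ^ (rs ! i) dvd m i j * p ^ (rs ! j)"
    and U: "\<And>i. i < length rs \<Longrightarrow> \<not> p dvd m i i"
    and x: "x \<in> carrier (Gpr p rs)" and y: "y \<in> carrier (Gpr p rs)"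
    and eq: "mmap p rs m x = mmap p rs m y"
  shows "x = y"
proof (rule ccontr)
  let ?k = "length rs"
  define z where "z j = int (x ! j) - int (y ! j)" for j
  define N where "N = {j. j < ?k \<and> z j \<noteq> 0}"
  define w where "w j = multiplicity (int p) (z j)" for j
  have xl: "length x = ?k" "\<And>i. i < ?k \<Longrightarrow> x ! i < p ^ (rs ! i)" using x by (auto simp: Gpr_carrier)
  have yl: "length y = ?k" "\<And>i. i < ?k \<Longrightarrow> y ! i < p ^ (rs ! i)" using y by (auto simp: Gpr_carrier)
  assume "x \<noteq> y"
  have "N \<noteq> {}"
  proof
    assume "N = {}"
    then have "\<And>j. j < ?k \<Longrightarrow> x ! j = y ! j" by (auto simp: N_def z_def)
    then have "x = y" using xl yl by (intro nth_equalityI) auto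
    with \<open>x \<noteq> y\<close> show False by simp
  qed
  have fN: "finite N" by (simp add: N_def)
  define W where "W = Min (w ` N)"
  define I where "I = Max {j \<in> N. w j = W}"
  have WN: "W \<in> w ` N" unfolding W_def using fN \<open>N \<noteq> {}\<close> by (intro Min_in) auto
  have ne: "{j \<in> N. w j = W} \<noteq> {}" using WN by auto
  have IN: "I \<in> {j \<in> N. w j = W}" unfolding I_def using fN ne by (intro Max_in) auto
  then have Ik: "I < ?k" and zI: "z I \<noteq> 0" and wI: "w I = W" by (auto simp: N_def)
  have p1: "1 < p" using p prime_gt_1_nat by blast
  have ip: "\<not> is_unit (int p)" using p1 by simp
  have Wle: "W \<le> w j" if "j \<in> N" for j unfolding W_def using fN that by (intro Min_le) auto
  have jgt: "W < w j" if "j \<in> N" "I < j" for j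
  proof (rule ccontr)
    assume "\<not> W < w j"
    then have "w j = W" using Wle[OF that(1)] by simp
    then have "j \<le> I" unfolding I_def using fN that(1) by (intro Max_ge) auto
    with that(2) show False by simp
  qed
  have powz: "int p ^ n dvd z j" if "n \<le> w j" for n j
    using that unfolding w_def by (rule multiplicity_dvd')
  have ndv: "\<not> int p ^ Suc W dvd z I"
    using power_dvd_iff_le_multiplicity[OF zI ip, of "Suc W"] wI by (simp add: w_def)
  have WR: "W < rs ! I"
  proof -
    have "int p ^ W dvd z I" using powz[of W I] wI by simp
    then have "\<bar>int p ^ W\<bar> \<le> \<bar>z I\<bar>" using zI by (rule dvd_imp_le_int[rotated])
    moreover have "\<bar>z I\<bar> < int p ^ (rs ! I)"
    proof -
      have a: "int (x ! I) < int p ^ (rs ! I)" "int (y ! I) < int p ^ (rs ! I)"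
        using xl(2)[OF Ik] yl(2)[OF Ik] by (metis of_nat_less_iff of_nat_power)+
      show ?thesis unfolding z_def abs_less_iff using a by linarith
    qed
    ultimately have "int (p ^ W) < int (p ^ (rs ! I))" by simp
    then have "p ^ W < p ^ (rs ! I)" by linarith
    then show ?thesis using p1 power_less_imp_less_exp by blast
  qed
  let ?q = "p ^ (rs ! I)"
  have "mmap p rs m x ! I = mmap p rs m y ! I" using eq by simp
  then have "(\<Sum>j<?k. m I j * x ! j) mod ?q = (\<Sum>j<?k. m I j * y ! j) mod ?q"
    using Ik by (simp add: mmap_def)
  then have "int (\<Sum>j<?k. m I j * x ! j) mod int ?q = int (\<Sum>j<?k. m I j * y ! j) mod int ?q"
    by (simp only: of_nat_mod[symmetric])
  then have "int ?q dvd int (\<Sum>j<?k. m I j * x ! j) - int (\<Sum>j<?k. m I j * y ! j)"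
    by (simp only: mod_eq_dvd_iff)
  also have "int (\<Sum>j<?k. m I j * x ! j) - int (\<Sum>j<?k. m I j * y ! j) = (\<Sum>j<?k. int (m I j) * z j)"
  proof -
    have "(\<Sum>j<?k. int (m I j) * z j) = (\<Sum>j<?k. int (m I j) * int (x ! j) - int (m I j) * int (y ! j))"
      by (simp add: z_def right_diff_distrib)
    also have "\<dots> = (\<Sum>j<?k. int (m I j) * int (x ! j)) - (\<Sum>j<?k. int (m I j) * int (y ! j))"
      by (rule sum_subtractf)
    finally show ?thesis by simp
  qed
  finally have qd: "int ?q dvd (\<Sum>j<?k. int (m I j) * z j)" .
  have "int p ^ Suc W dvd int p ^ (rs ! I)"
    by (rule le_imp_power_dvd) (use WR in simp)
  then have "int p ^ Suc W dvd int ?q" by simp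
  then have sd: "int p ^ Suc W dvd (\<Sum>j<?k. int (m I j) * z j)" using qd by (rule dvd_trans)
  have rest: "int p ^ Suc W dvd (\<Sum>j\<in>{..<?k} - {I}. int (m I j) * z j)"
  proof (rule dvd_sum)
    fix j assume j: "j \<in> {..<?k} - {I}"
    show "int p ^ Suc W dvd int (m I j) * z j"
    proof (cases "z j = 0")
      case True then show ?thesis by simp
    next
      case False
      then have jN: "j \<in> N" using j by (simp add: N_def)
      show ?thesis
      proof (cases "I < j")
        case True
        then have "Suc W \<le> w j" using jgt[OF jN] by simp
        then have "int p ^ Suc W dvd z j" by (rule powz)
        then show ?thesis by (rule dvd_mult)
      next
        case False
        then have ji: "j < I" using j by auto
        have "rs ! j < rs ! I" using sorted_wrt_nth_less[OF s ji Ik] by simp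
        have "p ^ (rs ! j) * p dvd p ^ (rs ! I)"
          using \<open>rs ! j < rs ! I\<close> by (metis Suc_leI le_imp_power_dvd power_Suc2)
        also have "\<dots> dvd m I j * p ^ (rs ! j)" using D[OF Ik] j by simp
        finally have "p dvd m I j" using p1 by (simp add: mult.commute)
        then have "int p dvd int (m I j)" by simp
        moreover have "int p ^ W dvd z j" using powz Wle[OF jN] by blast
        ultimately have "int p * int p ^ W dvd int (m I j) * z j" by (rule mult_dvd_mono)
        then show ?thesis by simp
      qed
    qed
  qed
  have seq: "(\<Sum>j<?k. int (m I j) * z j) = int (m I I) * z I + (\<Sum>j\<in>{..<?k} - {I}. int (m I j) * z j)"
    using Ik by (subst sum.remove[of _ I]) auto
  have dI: "int p ^ Suc W dvd int (m I I) * z I"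
    using sd unfolding seq dvd_add_left_iff[OF rest] .
  have cop: "coprime (int p ^ Suc W) (int (m I I))"
  proof -
    have "prime (int p)" using p by simp
    moreover have "\<not> int p dvd int (m I I)" using U[OF Ik] by simp
    ultimately have "coprime (int p) (int (m I I))" by (rule prime_imp_coprime)
    then show ?thesis by simp
  qed
  have "int p ^ Suc W dvd z I" using dI unfolding coprime_dvd_mult_right_iff[OF cop] .
  with ndv show False by simp
qed

lemma mmap_auto:
  assumes p: "prime p" and s: "sorted_wrt (<) rs"
    and D: "\<And>i j. i < length rs \<Longrightarrow> j < length rs \<Longrightarrow> p ^ (rs ! i) dvd m i j * p ^ (rs ! j)"
    and U: "\<And>i. i < length rs \<Longrightarrow> \<not> p dvd m i i"
  shows "(\<lambda>y\<in>carrier (Gpr p rs). mmap p rs m y) \<in> auto (Gpr p rs)"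
proof -
  let ?G = "Gpr p rs" let ?C = "carrier (Gpr p rs)" let ?f = "\<lambda>y\<in>carrier (Gpr p rs). mmap p rs m y"
  have p0: "0 < p" using p prime_gt_0_nat by blast
  have hom: "?f \<in> hom ?G ?G"
    unfolding hom_def
  proof (intro CollectI conjI ballI)
    show "?f \<in> ?C \<rightarrow> ?C" using mmap_carrier[OF p0] by simp
    fix x y assume xy: "x \<in> ?C" "y \<in> ?C"
    then have "x \<otimes>\<^bsub>?G\<^esub> y \<in> ?C" using Gpr_mult_closed[OF p0] by blast
    then show "?f (x \<otimes>\<^bsub>?G\<^esub> y) = ?f x \<otimes>\<^bsub>?G\<^esub> ?f y"
      using xy mmap_mult[OF p0 D] by simp
  qed
  have inj: "inj_on ?f ?C"
    by (rule inj_onI) (use mmap_inj[OF p s D U] in simp)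
  have im: "?f ` ?C \<subseteq> ?C" using mmap_carrier[OF p0] by auto
  have "?f ` ?C = ?C" by (rule endo_inj_surj[OF Gpr_finite im inj])
  then have "bij_betw ?f ?C ?C" using inj by (simp add: bij_betw_def)
  then have "?f \<in> Bij ?C" unfolding Bij_def by (simp add: restrict_extensional)
  with hom show ?thesis unfolding auto_def by (rule IntI)
qed

definition smul :: "nat \<Rightarrow> nat list \<Rightarrow> nat \<Rightarrow> nat list \<Rightarrow> nat list" where
  "smul p rs n x = map (\<lambda>i. n * x ! i mod p ^ (rs ! i)) [0..<length rs]"

lemma smul_carrier: "0 < p \<Longrightarrow> smul p rs n x \<in> carrier (Gpr p rs)"
  by (simp add: smul_def Gpr_carrier)

lemma smul_0: "smul p rs 0 x = \<one>\<^bsub>Gpr p rs\<^esub>"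
  by (simp add: smul_def Gpr_one map_replicate_const)

lemma smul_Suc:
  assumes "x \<in> carrier (Gpr p rs)"
  shows "smul p rs (Suc n) x = smul p rs n x \<otimes>\<^bsub>Gpr p rs\<^esub> x"
proof (rule nth_equalityI)
  show "length (smul p rs (Suc n) x) = length (smul p rs n x \<otimes>\<^bsub>Gpr p rs\<^esub> x)"
    by (simp add: smul_def Gpr_mult)
  fix i assume "i < length (smul p rs (Suc n) x)"
  then have i: "i < length rs" by (simp add: smul_def)
  have "(n * x ! i mod p ^ (rs ! i) + x ! i) mod p ^ (rs ! i) = (n * x ! i + x ! i) mod p ^ (rs ! i)"
    by (rule mod_add_left_eq)
  also have "n * x ! i + x ! i = Suc n * x ! i" by simp
  finally have "Suc n * x ! i mod p ^ (rs ! i) = (n * x ! i mod p ^ (rs ! i) + x ! i) mod p ^ (rs ! i)" by simp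
  then show "smul p rs (Suc n) x ! i = (smul p rs n x \<otimes>\<^bsub>Gpr p rs\<^esub> x) ! i"
    using i by (simp add: smul_def Gpr_mult)
qed

lemma double_mod_self: "(a::nat) < q \<Longrightarrow> (a + a) mod q = a \<Longrightarrow> a = 0"
proof (cases "a + a < q")
  case True
  assume "(a + a) mod q = a"
  with True show ?thesis by simp
next
  case False
  assume a: "a < q" "(a + a) mod q = a"
  have "(a + a) mod q = (a + a - q) mod q" using False by (simp add: le_mod_geq)
  also have "\<dots> = a + a - q" using a(1) by simp
  finally show ?thesis using a by simp
qed

lemma Gpr_hom_one:
  assumes "0 < p" "f \<in> hom (Gpr p rs) (Gpr p rs)"
  shows "f \<one>\<^bsub>Gpr p rs\<^esub> = \<one>\<^bsub>Gpr p rs\<^esub>"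
proof -
  let ?G = "Gpr p rs" let ?o = "\<one>\<^bsub>Gpr p rs\<^esub>"
  have o: "?o \<in> carrier ?G" by (rule Gpr_one_closed[OF assms(1)])
  have oo: "?o \<otimes>\<^bsub>?G\<^esub> ?o = ?o"
  proof (rule nth_equalityI)
    show "length (?o \<otimes>\<^bsub>?G\<^esub> ?o) = length ?o" by (simp add: Gpr_one Gpr_mult)
    fix i assume "i < length (?o \<otimes>\<^bsub>?G\<^esub> ?o)"
    then have "i < length rs" by (simp add: Gpr_mult)
    then show "(?o \<otimes>\<^bsub>?G\<^esub> ?o) ! i = ?o ! i" by (simp add: Gpr_one Gpr_mult)
  qed
  have a: "f ?o \<in> carrier ?G" by (rule hom_in_carrier[OF assms(2) o])
  have "f ?o \<otimes>\<^bsub>?G\<^esub> f ?o = f ?o" using hom_mult[OF assms(2) o o] oo by simp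
  then have aa: "\<And>i. i < length rs \<Longrightarrow> (f ?o ! i + f ?o ! i) mod p ^ (rs ! i) = f ?o ! i"
    by (metis (no_types, lifting) Gpr_mult diff_zero length_upt nth_map nth_upt add_0)
  show ?thesis
  proof (rule nth_equalityI)
    show "length (f ?o) = length ?o" using a by (simp add: Gpr_carrier Gpr_one)
    fix i assume "i < length (f ?o)"
    then have i: "i < length rs" using a by (simp add: Gpr_carrier)
    have "f ?o ! i < p ^ (rs ! i)" using a i by (simp add: Gpr_carrier)
    then have "f ?o ! i = 0" using aa[OF i] by (rule double_mod_self)
    then show "f ?o ! i = ?o ! i" using i by (simp add: Gpr_one)
  qed
qed

lemma hom_smul:
  assumes "0 < p" "f \<in> hom (Gpr p rs) (Gpr p rs)" "x \<in> carrier (Gpr p rs)"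
  shows "f (smul p rs n x) = smul p rs n (f x)"
proof (induction n)
  case 0
  show ?case by (simp add: smul_0 Gpr_hom_one[OF assms(1,2)])
next
  case (Suc n)
  have fx: "f x \<in> carrier (Gpr p rs)" by (rule hom_in_carrier[OF assms(2,3)])
  have "f (smul p rs (Suc n) x) = f (smul p rs n x \<otimes>\<^bsub>Gpr p rs\<^esub> x)" by (simp add: smul_Suc[OF assms(3)])
  also have "\<dots> = f (smul p rs n x) \<otimes>\<^bsub>Gpr p rs\<^esub> f x"
    by (rule hom_mult[OF assms(2) smul_carrier[OF assms(1)] assms(3)])
  also have "\<dots> = smul p rs (Suc n) (f x)" using Suc by (simp add: smul_Suc[OF fx])
  finally show ?case .
qed

definition inS :: "nat \<Rightarrow> nat list \<Rightarrow> nat \<Rightarrow> nat \<Rightarrow> nat list \<Rightarrow> bool" where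
  "inS p rs a b x \<longleftrightarrow> (\<exists>z\<in>carrier (Gpr p rs). \<exists>w\<in>carrier (Gpr p rs).
      x = smul p rs (p ^ a) z \<otimes>\<^bsub>Gpr p rs\<^esub> w \<and> smul p rs (p ^ b) w = \<one>\<^bsub>Gpr p rs\<^esub>)"

lemma inS_I:
  "z \<in> carrier (Gpr p rs) \<Longrightarrow> w \<in> carrier (Gpr p rs) \<Longrightarrow> x = smul p rs (p ^ a) z \<otimes>\<^bsub>Gpr p rs\<^esub> w
   \<Longrightarrow> smul p rs (p ^ b) w = \<one>\<^bsub>Gpr p rs\<^esub> \<Longrightarrow> inS p rs a b x"
  unfolding inS_def by blast

lemma inS_E:
  "inS p rs a b x \<Longrightarrow> (\<And>z w. z \<in> carrier (Gpr p rs) \<Longrightarrow> w \<in> carrier (Gpr p rs) \<Longrightarrow> x = smul p rs (p ^ a) z \<otimes>\<^bsub>Gpr p rs\<^esub> w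
   \<Longrightarrow> smul p rs (p ^ b) w = \<one>\<^bsub>Gpr p rs\<^esub> \<Longrightarrow> P) \<Longrightarrow> P"
  unfolding inS_def by blast

lemma inS_hom:
  assumes "0 < p" "f \<in> hom (Gpr p rs) (Gpr p rs)" "inS p rs a b x"
  shows "inS p rs a b (f x)"
proof -
  obtain z w where z: "z \<in> carrier (Gpr p rs)" and w: "w \<in> carrier (Gpr p rs)"
    and x: "x = smul p rs (p ^ a) z \<otimes>\<^bsub>Gpr p rs\<^esub> w" and w1: "smul p rs (p ^ b) w = \<one>\<^bsub>Gpr p rs\<^esub>"
    using assms(3) by (rule inS_E)
  have "f x = f (smul p rs (p ^ a) z) \<otimes>\<^bsub>Gpr p rs\<^esub> f w"
    unfolding x by (rule hom_mult[OF assms(2) smul_carrier[OF assms(1)] w])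
  also have "\<dots> = smul p rs (p ^ a) (f z) \<otimes>\<^bsub>Gpr p rs\<^esub> f w"
    by (simp add: hom_smul[OF assms(1,2) z])
  finally have 1: "f x = smul p rs (p ^ a) (f z) \<otimes>\<^bsub>Gpr p rs\<^esub> f w" .
  have 2: "smul p rs (p ^ b) (f w) = \<one>\<^bsub>Gpr p rs\<^esub>"
    using hom_smul[OF assms(1,2) w, of "p ^ b"] w1 Gpr_hom_one[OF assms(1,2)] by simp
  show ?thesis by (rule inS_I[OF hom_in_carrier[OF assms(2) z] hom_in_carrier[OF assms(2) w] 1 2])
qed

definition valid :: "nat list \<Rightarrow> nat list \<Rightarrow> bool" where
  "valid rs e \<longleftrightarrow> length e = length rs \<and> (\<forall>i<length rs. e ! i \<le> rs ! i) \<and>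
     (\<forall>i j. i < j \<longrightarrow> j < length rs \<longrightarrow> e ! i \<le> e ! j \<and> e ! j + rs ! i \<le> e ! i + rs ! j)"

lemma valid_len: "valid rs e \<Longrightarrow> length e = length rs"
  unfolding valid_def by (elim conjE)

lemma valid_le: "valid rs e \<Longrightarrow> i < length rs \<Longrightarrow> e ! i \<le> rs ! i"
  unfolding valid_def by (elim conjE) (erule allE, erule mp)

lemma valid_mono: "valid rs e \<Longrightarrow> i < j \<Longrightarrow> j < length rs \<Longrightarrow> e ! i \<le> e ! j"
  unfolding valid_def by (elim conjE) (drule spec[of _ i], drule spec[of _ j], simp)

lemma valid_lip: "valid rs e \<Longrightarrow> i < j \<Longrightarrow> j < length rs \<Longrightarrow> e ! j + rs ! i \<le> e ! i + rs ! j"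
  unfolding valid_def by (elim conjE) (drule spec[of _ i], drule spec[of _ j], simp)

definition cano :: "nat \<Rightarrow> nat list \<Rightarrow> nat list \<Rightarrow> nat list" where
  "cano p rs e = map (\<lambda>i. p ^ (e ! i) mod p ^ (rs ! i)) [0..<length rs]"

lemma cano_carrier: "0 < p \<Longrightarrow> cano p rs e \<in> carrier (Gpr p rs)"
  by (simp add: cano_def Gpr_carrier)

lemma cano_inS:
  assumes p: "0 < p" and v: "valid rs e" and i: "i < length rs" and a: "a \<le> e ! i"
  shows "inS p rs a (rs ! i - a) (cano p rs e)"
proof -
  let ?k = "length rs" let ?q = "\<lambda>j. p ^ (rs ! j)" let ?b = "rs ! i - a"
  define z where "z = map (\<lambda>j. if a \<le> e ! j then p ^ (e ! j - a) mod ?q j else 0) [0..<?k]"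
  define w where "w = map (\<lambda>j. if a \<le> e ! j then 0 else p ^ (e ! j) mod ?q j) [0..<?k]"
  have z: "z \<in> carrier (Gpr p rs)" using p by (simp add: z_def Gpr_carrier)
  have w: "w \<in> carrier (Gpr p rs)" using p by (simp add: w_def Gpr_carrier)
  have eq: "cano p rs e = smul p rs (p ^ a) z \<otimes>\<^bsub>Gpr p rs\<^esub> w"
  proof (rule nth_equalityI)
    show "length (cano p rs e) = length (smul p rs (p ^ a) z \<otimes>\<^bsub>Gpr p rs\<^esub> w)"
      by (simp add: cano_def Gpr_mult)
    fix j assume "j < length (cano p rs e)"
    then have j: "j < ?k" by (simp add: cano_def)
    show "cano p rs e ! j = (smul p rs (p ^ a) z \<otimes>\<^bsub>Gpr p rs\<^esub> w) ! j"
    proof (cases "a \<le> e ! j")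
      case True
      have zj: "z ! j = p ^ (e ! j - a) mod ?q j" using True j by (simp add: z_def)
      have wj: "w ! j = 0" using True j by (simp add: w_def)
      have "p ^ a * (p ^ (e ! j - a) mod ?q j) mod ?q j = p ^ a * p ^ (e ! j - a) mod ?q j"
        by (rule mod_mult_right_eq)
      also have "p ^ a * p ^ (e ! j - a) = p ^ (a + (e ! j - a))" by (rule power_add[symmetric])
      also have "a + (e ! j - a) = e ! j" using True by simp
      finally have "p ^ a * z ! j mod ?q j = p ^ (e ! j) mod ?q j" unfolding zj .
      then show ?thesis using j wj by (simp add: cano_def smul_def Gpr_mult)
    next
      case False
      have zj: "z ! j = 0" using False j by (simp add: z_def)
      have wj: "w ! j = p ^ (e ! j) mod ?q j" using False j by (simp add: w_def)
      show ?thesis using j zj wj by (simp add: cano_def smul_def Gpr_mult)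
    qed
  qed
  have one: "smul p rs (p ^ ?b) w = \<one>\<^bsub>Gpr p rs\<^esub>"
  proof (rule nth_equalityI)
    show "length (smul p rs (p ^ ?b) w) = length \<one>\<^bsub>Gpr p rs\<^esub>" by (simp add: smul_def Gpr_one)
    fix j assume "j < length (smul p rs (p ^ ?b) w)"
    then have j: "j < ?k" by (simp add: smul_def)
    show "smul p rs (p ^ ?b) w ! j = \<one>\<^bsub>Gpr p rs\<^esub> ! j"
    proof (cases "a \<le> e ! j")
      case True
      have wj: "w ! j = 0" using True j by (simp add: w_def)
      show ?thesis using j wj by (simp add: smul_def Gpr_one)
    next
      case False
      have ji: "j < i"
      proof (rule ccontr)
        assume "\<not> j < i"
        then have "i = j \<or> i < j" by linarith
        then have "e ! i \<le> e ! j"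
        proof
          assume "i = j" then show ?thesis by simp
        next
          assume "i < j" then show ?thesis using valid_mono[OF v _ j] by simp
        qed
        with a False show False by simp
      qed
      have "e ! i + rs ! j \<le> e ! j + rs ! i" by (rule valid_lip[OF v ji i])
      moreover have "e ! i \<le> rs ! i" by (rule valid_le[OF v i])
      ultimately have le: "rs ! j \<le> ?b + e ! j" using a by linarith
      have wj: "w ! j = p ^ (e ! j) mod ?q j" using False j by (simp add: w_def)
      have "p ^ ?b * (p ^ (e ! j) mod ?q j) mod ?q j = p ^ ?b * p ^ (e ! j) mod ?q j"
        by (rule mod_mult_right_eq)
      also have "\<dots> = p ^ (?b + e ! j) mod ?q j" by (simp only: power_add)
      also have "\<dots> = 0" by (rule dvd_imp_mod_0[OF le_imp_power_dvd[OF le]])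
      finally have "p ^ ?b * w ! j mod ?q j = 0" unfolding wj .
      then show ?thesis using j by (simp add: smul_def Gpr_one)
    qed
  qed
  show ?thesis by (rule inS_I[OF z w eq one])
qed

lemma inS_cano:
  assumes p: "prime p" and v: "valid rs e" and i: "i < length rs" and a: "a \<le> rs ! i"
    and S: "inS p rs a (rs ! i - a) (cano p rs e)"
  shows "a \<le> e ! i"
proof -
  let ?q = "p ^ (rs ! i)" let ?b = "rs ! i - a"
  have p1: "1 < p" using p prime_gt_1_nat by blast
  obtain z w where z: "z \<in> carrier (Gpr p rs)" and w: "w \<in> carrier (Gpr p rs)"
    and x: "cano p rs e = smul p rs (p ^ a) z \<otimes>\<^bsub>Gpr p rs\<^esub> w" and w1: "smul p rs (p ^ ?b) w = \<one>\<^bsub>Gpr p rs\<^esub>"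
    using S by (rule inS_E)
  have "cano p rs e ! i = (smul p rs (p ^ a) z \<otimes>\<^bsub>Gpr p rs\<^esub> w) ! i" using x by simp
  then have c: "p ^ (e ! i) mod ?q = ((p ^ a * z ! i) mod ?q + w ! i) mod ?q"
    using i by (simp add: cano_def smul_def Gpr_mult)
  have "smul p rs (p ^ ?b) w ! i = \<one>\<^bsub>Gpr p rs\<^esub> ! i" using w1 by simp
  then have "(p ^ ?b * w ! i) mod ?q = 0" using i by (simp add: smul_def Gpr_one)
  then have "?q dvd p ^ ?b * w ! i" by (simp add: mod_eq_0_iff_dvd)
  moreover have "?q = p ^ ?b * p ^ a"
  proof -
    have "rs ! i = ?b + a" using a by simp
    then have "?q = p ^ (?b + a)" by (rule arg_cong)
    then show ?thesis by (simp only: power_add)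
  qed
  ultimately have "p ^ ?b * p ^ a dvd p ^ ?b * w ! i" by simp
  then have wd: "p ^ a dvd w ! i" using p1 by simp
  have qd: "p ^ a dvd ?q" using a by (simp add: le_imp_power_dvd)
  have "p ^ a dvd (p ^ a * z ! i) mod ?q" using qd by (simp add: dvd_mod)
  then have "p ^ a dvd (p ^ a * z ! i) mod ?q + w ! i" using wd by simp
  then have "p ^ a dvd p ^ (e ! i) mod ?q" unfolding c using qd by (simp add: dvd_mod)
  show ?thesis
  proof (cases "e ! i < rs ! i")
    case True
    then have "p ^ (e ! i) < ?q" using p1 by (simp add: power_strict_increasing)
    then have "p ^ a dvd p ^ (e ! i)" using \<open>p ^ a dvd p ^ (e ! i) mod ?q\<close> by simp
    moreover have "2 \<le> p" using p1 by simp
    ultimately show ?thesis using dvd_power_iff_le by blast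
  next
    case False
    then have "e ! i = rs ! i" using valid_le[OF v i] by simp
    then show ?thesis using a by simp
  qed
qed

definition vv :: "nat \<Rightarrow> nat list \<Rightarrow> nat list \<Rightarrow> nat \<Rightarrow> nat" where
  "vv p rs x j = (if x ! j = 0 then rs ! j else multiplicity p (x ! j))"

definition EE :: "nat \<Rightarrow> nat list \<Rightarrow> nat list \<Rightarrow> nat \<Rightarrow> nat" where
  "EE p rs x i = Min ((\<lambda>j. vv p rs x j + (rs ! i - rs ! j)) ` {..<length rs})"

definition Elist :: "nat \<Rightarrow> nat list \<Rightarrow> nat list \<Rightarrow> nat list" where
  "Elist p rs x = map (EE p rs x) [0..<length rs]"

context
  fixes p :: nat and rs :: "nat list" and x :: "nat list"
  assumes p: "prime p" and s: "sorted_wrt (<) rs" and x: "x \<in> carrier (Gpr p rs)"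
begin

private abbreviation "k \<equiv> length rs"
private abbreviation "v \<equiv> vv p rs x"
private abbreviation "E \<equiv> EE p rs x"

lemma p1: "1 < p" using p prime_gt_1_nat by blast

lemma xlen: "length x = k" using x by (simp add: Gpr_carrier)
lemma xlt: "j < k \<Longrightarrow> x ! j < p ^ (rs ! j)" using x by (simp add: Gpr_carrier)

lemma v_dvd: "p ^ v j dvd x ! j"
  by (simp add: vv_def multiplicity_dvd)

lemma v_lt: "j < k \<Longrightarrow> x ! j \<noteq> 0 \<Longrightarrow> v j < rs ! j"
proof -
  assume j: "j < k" and nz: "x ! j \<noteq> 0"
  have "p ^ v j \<le> x ! j" using v_dvd[of j] nz by (simp add: dvd_imp_le)
  also have "\<dots> < p ^ (rs ! j)" by (rule xlt[OF j])
  finally show ?thesis using p1 power_less_imp_less_exp by blast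
qed

lemma v_le: "j < k \<Longrightarrow> v j \<le> rs ! j"
  using v_lt by (cases "x ! j = 0") (auto simp: vv_def less_imp_le)

lemma v_ndvd: "x ! j \<noteq> 0 \<Longrightarrow> \<not> p dvd (x ! j div p ^ v j)"
proof
  assume nz: "x ! j \<noteq> 0" and d: "p dvd x ! j div p ^ v j"
  have "x ! j = x ! j div p ^ v j * p ^ v j" using v_dvd[of j] by simp
  then have "p * p ^ v j dvd x ! j" using d by (metis mult_dvd_mono dvd_refl mult.commute)
  then have "p ^ Suc (v j) dvd x ! j" by simp
  moreover have "\<not> is_unit p" using p1 by simp
  ultimately have "Suc (v j) \<le> multiplicity p (x ! j)"
    using power_dvd_iff_le_multiplicity[OF nz] by blast
  then show False using nz by (simp add: vv_def)
qed

lemma E_le: "i < k \<Longrightarrow> j < k \<Longrightarrow> E i \<le> v j + (rs ! i - rs ! j)"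
  unfolding EE_def by (rule Min_le) auto

lemma E_ex: "i < k \<Longrightarrow> \<exists>l<k. E i = v l + (rs ! i - rs ! l)"
proof -
  assume i: "i < k"
  have "E i \<in> (\<lambda>j. v j + (rs ! i - rs ! j)) ` {..<k}"
    unfolding EE_def using i by (intro Min_in) auto
  then show ?thesis by auto
qed

lemma E_le_v: "i < k \<Longrightarrow> E i \<le> v i"
  using E_le[of i i] by simp

lemma rs_less: "i < j \<Longrightarrow> j < k \<Longrightarrow> rs ! i < rs ! j"
  using sorted_wrt_nth_less[OF s] by blast

lemma valid_E: "valid rs (Elist p rs x)"
  unfolding valid_def
proof (intro conjI)
  show "length (Elist p rs x) = k" by (simp add: Elist_def)
next
  show "\<forall>i<k. Elist p rs x ! i \<le> rs ! i"
  proof (intro allI impI)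
    fix i assume i: "i < k"
    show "Elist p rs x ! i \<le> rs ! i" using E_le_v[OF i] v_le[OF i] i by (simp add: Elist_def)
  qed
next
  show "\<forall>i j. i < j \<longrightarrow> j < k \<longrightarrow> Elist p rs x ! i \<le> Elist p rs x ! j \<and> Elist p rs x ! j + rs ! i \<le> Elist p rs x ! i + rs ! j"
  proof (intro allI impI)
    fix i j assume ij: "i < j" and j: "j < k"
    have i: "i < k" using ij j by simp
    have R: "rs ! i < rs ! j" by (rule rs_less[OF ij j])
    obtain l where l: "l < k" "E j = v l + (rs ! j - rs ! l)" using E_ex[OF j] by blast
    have "E i \<le> v l + (rs ! i - rs ! l)" by (rule E_le[OF i l(1)])
    also have "\<dots> \<le> E j" using l(2) R by simp
    finally have 1: "E i \<le> E j" .
    obtain l' where l': "l' < k" "E i = v l' + (rs ! i - rs ! l')" using E_ex[OF i] by blast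
    have "E j \<le> v l' + (rs ! j - rs ! l')" by (rule E_le[OF j l'(1)])
    then have 2: "E j + rs ! i \<le> E i + rs ! j" using l'(2) R by linarith
    show "Elist p rs x ! i \<le> Elist p rs x ! j \<and> Elist p rs x ! j + rs ! i \<le> Elist p rs x ! i + rs ! j"
      using 1 2 i j by (simp add: Elist_def)
  qed
qed

definition "tt i = x ! i div p ^ E i"
definition "JJ i = (SOME l. l < k \<and> E i = v l + (rs ! i - rs ! l))"
definition "mm i j = (if j = i then (if v i = E i \<and> x ! i \<noteq> 0 then tt i else 1)
    else if v i \<noteq> E i \<and> j = JJ i then p ^ (E i - E (JJ i)) * (tt i + p ^ (rs ! i) - 1) else 0)"

lemma JJ: "i < k \<Longrightarrow> JJ i < k \<and> E i = v (JJ i) + (rs ! i - rs ! (JJ i))"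
  unfolding JJ_def using E_ex by (rule someI_ex)

lemma JJ_ne: "i < k \<Longrightarrow> v i \<noteq> E i \<Longrightarrow> JJ i \<noteq> i"
  using JJ by fastforce

lemma JJ_le: "i < k \<Longrightarrow> E (JJ i) + (rs ! i - rs ! JJ i) \<le> E i"
  using JJ[of i] E_le_v[of "JJ i"] by simp

lemma mm_D: "i < k \<Longrightarrow> j < k \<Longrightarrow> p ^ (rs ! i) dvd mm i j * p ^ (rs ! j)"
proof -
  assume i: "i < k" and j: "j < k"
  show ?thesis
  proof (cases "j = i")
    case True then show ?thesis by simp
  next
    case False
    show ?thesis
    proof (cases "v i \<noteq> E i \<and> j = JJ i")
      case True
      let ?l = "JJ i"
      have le: "rs ! i \<le> (E i - E ?l) + rs ! ?l" using JJ_le[OF i] by linarith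
      have "p ^ (rs ! i) dvd p ^ ((E i - E ?l) + rs ! ?l)" by (rule le_imp_power_dvd[OF le])
      also have "\<dots> = p ^ (E i - E ?l) * p ^ (rs ! ?l)" by (rule power_add)
      also have "\<dots> dvd (p ^ (E i - E ?l) * (tt i + p ^ (rs ! i) - 1)) * p ^ (rs ! ?l)"
        by (simp add: mult_dvd_mono)
      finally show ?thesis using True False by (simp add: mm_def)
    next
      case False2: False
      have "mm i j = 0" using False False2 unfolding mm_def by auto
      then show ?thesis by simp
    qed
  qed
qed

lemma mm_U: "i < k \<Longrightarrow> \<not> p dvd mm i i"
proof -
  assume i: "i < k"
  show ?thesis
  proof (cases "v i = E i \<and> x ! i \<noteq> 0")
    case True
    have "\<not> p dvd (x ! i div p ^ v i)" using v_ndvd True by blast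
    then have "\<not> p dvd tt i" using True by (simp add: tt_def)
    moreover have "mm i i = tt i" using True by (simp add: mm_def)
    ultimately show ?thesis by simp
  next
    case False
    have "mm i i = 1" using False unfolding mm_def by auto
    then show ?thesis using p1 by simp
  qed
qed

lemma c_eq: "i < k \<Longrightarrow> E i < rs ! i \<Longrightarrow> cano p rs (Elist p rs x) ! i = p ^ E i"
proof -
  assume i: "i < k" and lt: "E i < rs ! i"
  have "p ^ E i < p ^ (rs ! i)" using lt p1 by (simp add: power_strict_increasing)
  then show ?thesis using i by (simp add: cano_def Elist_def)
qed

lemma mm_apply: "mmap p rs mm (cano p rs (Elist p rs x)) = x"
proof (rule nth_equalityI)
  show "length (mmap p rs mm (cano p rs (Elist p rs x))) = length x"
    by (simp add: mmap_def xlen)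
  fix i assume "i < length (mmap p rs mm (cano p rs (Elist p rs x)))"
  then have i: "i < k" by (simp add: mmap_def)
  let ?c = "cano p rs (Elist p rs x)" let ?q = "p ^ (rs ! i)"
  have lhs: "mmap p rs mm ?c ! i = (\<Sum>j<k. mm i j * ?c ! j) mod ?q"
    using i by (simp add: mmap_def)
  have xd: "p ^ E i dvd x ! i" using v_dvd[of i] E_le_v[OF i] by (metis le_imp_power_dvd dvd_trans)
  show "mmap p rs mm ?c ! i = x ! i"
  proof (cases "v i = E i")
    case True
    have "(\<Sum>j<k. mm i j * ?c ! j) = (\<Sum>j<k. if j = i then mm i i * ?c ! i else 0)"
      by (rule sum.cong) (auto simp: mm_def True)
    also have "\<dots> = mm i i * ?c ! i" using i by simp
    finally have sm: "(\<Sum>j<k. mm i j * ?c ! j) = mm i i * ?c ! i" .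
    show ?thesis
    proof (cases "x ! i = 0")
      case True2: True
      have "E i = rs ! i" using True True2 by (simp add: vv_def)
      then have "?c ! i = 0" using i by (simp add: cano_def Elist_def)
      then show ?thesis using lhs sm True2 by simp
    next
      case False
      have lt: "E i < rs ! i" using v_lt[OF i False] True by simp
      have "mm i i * ?c ! i = tt i * p ^ E i" using True False c_eq[OF i lt] by (simp add: mm_def)
      also have "\<dots> = x ! i" using xd by (simp add: tt_def)
      finally show ?thesis using lhs sm xlt[OF i] by simp
    qed
  next
    case False
    let ?l = "JJ i"
    have l: "?l < k" using JJ[OF i] by blast
    have ne: "?l \<noteq> i" by (rule JJ_ne[OF i False])
    define M where "M = p ^ (E i - E ?l) * (tt i + ?q - 1)"
    have "(\<Sum>j<k. mm i j * ?c ! j) = (\<Sum>j<k. (if j = i then ?c ! i else 0) + (if j = ?l then M * ?c ! ?l else 0))"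
      by (rule sum.cong) (use ne False in \<open>auto simp: mm_def M_def\<close>)
    also have "\<dots> = ?c ! i + M * ?c ! ?l" using i l by (simp add: sum.distrib)
    finally have sm: "(\<Sum>j<k. mm i j * ?c ! j) = ?c ! i + M * ?c ! ?l" .
    have lt: "E i < rs ! i" using E_le_v[OF i] v_le[OF i] False by simp
    have ci: "?c ! i = p ^ E i" by (rule c_eq[OF i lt])
    have cl: "?c ! ?l = p ^ E ?l mod p ^ (rs ! ?l)" using l by (simp add: cano_def Elist_def)
    have MD: "?q dvd M * p ^ (rs ! ?l)"
      using mm_D[OF i l] ne False by (simp add: mm_def M_def)
    have "(?c ! i + M * ?c ! ?l) mod ?q = (p ^ E i + (M * ?c ! ?l) mod ?q) mod ?q"
      by (simp add: ci mod_add_right_eq)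
    also have "(M * ?c ! ?l) mod ?q = (M * p ^ E ?l) mod ?q"
      unfolding cl by (rule mod_transfer[OF MD])
    also have "(p ^ E i + (M * p ^ E ?l) mod ?q) mod ?q = (p ^ E i + M * p ^ E ?l) mod ?q"
      by (simp add: mod_add_right_eq)
    also have "M * p ^ E ?l = p ^ E i * (tt i + ?q - 1)"
    proof -
      have "E ?l \<le> E i" using JJ_le[OF i] by linarith
      then have "p ^ (E i - E ?l) * p ^ E ?l = p ^ E i" by (simp flip: power_add)
      then show ?thesis unfolding M_def by (metis mult.assoc mult.commute)
    qed
    also have "p ^ E i + p ^ E i * (tt i + ?q - 1) = x ! i + p ^ E i * ?q"
    proof -
      have q1: "1 \<le> ?q" using p1 by simp
      have "p ^ E i + p ^ E i * (tt i + ?q - 1) = p ^ E i * (1 + (tt i + ?q - 1))"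
        by (simp add: distrib_left)
      also have "1 + (tt i + ?q - 1) = tt i + ?q" using q1 by simp
      also have "p ^ E i * (tt i + ?q) = tt i * p ^ E i + p ^ E i * ?q" by (simp add: algebra_simps)
      also have "tt i * p ^ E i = x ! i" using xd by (simp add: tt_def)
      finally show ?thesis .
    qed
    also have "(x ! i + p ^ E i * ?q) mod ?q = x ! i" using xlt[OF i] by simp
    finally show ?thesis using lhs sm by simp
  qed
qed

lemma x_orbit: "aut_orbit (Gpr p rs) x = aut_orbit (Gpr p rs) (cano p rs (Elist p rs x))"
proof -
  have p0: "0 < p" using p1 by simp
  let ?f = "\<lambda>y\<in>carrier (Gpr p rs). mmap p rs mm y"
  have f: "?f \<in> auto (Gpr p rs)" by (rule mmap_auto[OF p s mm_D mm_U])
  have c: "cano p rs (Elist p rs x) \<in> carrier (Gpr p rs)" by (rule cano_carrier[OF p0])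
  have "?f (cano p rs (Elist p rs x)) = x" using c mm_apply by simp
  then show ?thesis using orbit_eq[OF p0 f c] by simp
qed

end


lemma valid_snoc:
  assumes ne: "rs \<noteq> []" and s: "sorted_wrt (<) (rs @ [r])"
  shows "valid (rs @ [r]) (e @ [y]) \<longleftrightarrow>
    valid rs e \<and> e ! (length rs - 1) \<le> y \<and> y \<le> e ! (length rs - 1) + (r - rs ! (length rs - 1))"
proof -
  let ?K = "length rs" let ?L = "rs ! (length rs - 1)"
  have K: "0 < ?K" using ne by simp
  have Lr: "?L < r" using sorted_wrt_nth_less[OF s, of "?K - 1" "?K"] K by (simp add: nth_append)
  show ?thesis
  proof
    assume V: "valid (rs @ [r]) (e @ [y])"
    have len: "length e = ?K" using valid_len[OF V] by simp
    have en: "\<And>i. i < ?K \<Longrightarrow> (e @ [y]) ! i = e ! i" using len by (simp add: nth_append)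
    have rn: "\<And>i. i < ?K \<Longrightarrow> (rs @ [r]) ! i = rs ! i" by (simp add: nth_append)
    have eK: "(e @ [y]) ! ?K = y" using len[symmetric] by simp
    have rK: "(rs @ [r]) ! ?K = r" by simp
    have "valid rs e"
      unfolding valid_def
    proof (intro conjI)
      show "length e = ?K" by (rule len)
      show "\<forall>i<?K. e ! i \<le> rs ! i"
      proof (intro allI impI)
        fix i assume i: "i < ?K"
        show "e ! i \<le> rs ! i" using valid_le[OF V, of i] i en[OF i] rn[OF i] by simp
      qed
      show "\<forall>i j. i < j \<longrightarrow> j < ?K \<longrightarrow> e ! i \<le> e ! j \<and> e ! j + rs ! i \<le> e ! i + rs ! j"
      proof (intro allI impI)
        fix i j assume ij: "i < j" and j: "j < ?K"
        have i: "i < ?K" using ij j by simp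
        have j': "j < length (rs @ [r])" using j by simp
        show "e ! i \<le> e ! j \<and> e ! j + rs ! i \<le> e ! i + rs ! j"
          using valid_mono[OF V ij j'] valid_lip[OF V ij j'] en[OF i] en[OF j] rn[OF i] rn[OF j] by simp
      qed
    qed
    moreover have "e ! (?K - 1) \<le> y"
      using valid_mono[OF V, of "?K - 1" "?K"] K en[of "?K - 1"] eK by simp
    moreover have "y \<le> e ! (?K - 1) + (r - ?L)"
    proof -
      have "y + ?L \<le> e ! (?K - 1) + r"
        using valid_lip[OF V, of "?K - 1" "?K"] K en[of "?K - 1"] rn[of "?K - 1"] eK by simp
      then show ?thesis using Lr by linarith
    qed
    ultimately show "valid rs e \<and> e ! (?K - 1) \<le> y \<and> y \<le> e ! (?K - 1) + (r - ?L)" by blast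
  next
    assume A: "valid rs e \<and> e ! (?K - 1) \<le> y \<and> y \<le> e ! (?K - 1) + (r - ?L)"
    then have v: "valid rs e" and y1: "e ! (?K - 1) \<le> y" and y2: "y \<le> e ! (?K - 1) + (r - ?L)" by blast+
    have len: "length e = ?K" by (rule valid_len[OF v])
    have en: "\<And>i. i < ?K \<Longrightarrow> (e @ [y]) ! i = e ! i" using len by (simp add: nth_append)
    have rn: "\<And>i. i < ?K \<Longrightarrow> (rs @ [r]) ! i = rs ! i" by (simp add: nth_append)
    have eK: "(e @ [y]) ! ?K = y" using len[symmetric] by simp
    have rK: "(rs @ [r]) ! ?K = r" by simp
    have eL: "e ! (?K - 1) \<le> ?L" using valid_le[OF v, of "?K - 1"] K by simp
    have toK: "e ! i \<le> y \<and> y + rs ! i \<le> e ! i + r" if i: "i < ?K" for i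
    proof (cases "i = ?K - 1")
      case True
      then show ?thesis using y1 y2 Lr by simp
    next
      case False
      then have i': "i < ?K - 1" using i by simp
      have K1: "?K - 1 < ?K" using K by simp
      have "e ! i \<le> e ! (?K - 1)" by (rule valid_mono[OF v i' K1])
      moreover have "e ! (?K - 1) + rs ! i \<le> e ! i + ?L" by (rule valid_lip[OF v i' K1])
      ultimately show ?thesis using y1 y2 Lr by linarith
    qed
    show "valid (rs @ [r]) (e @ [y])"
      unfolding valid_def
    proof (intro conjI)
      show "length (e @ [y]) = length (rs @ [r])" using len by simp
      show "\<forall>i<length (rs @ [r]). (e @ [y]) ! i \<le> (rs @ [r]) ! i"
      proof (intro allI impI)
        fix i assume "i < length (rs @ [r])"
        then have "i < ?K \<or> i = ?K" by auto
        then show "(e @ [y]) ! i \<le> (rs @ [r]) ! i"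
        proof
          assume i: "i < ?K"
          show ?thesis using valid_le[OF v i] en[OF i] rn[OF i] by simp
        next
          assume i: "i = ?K"
          show ?thesis using i eK rK y2 eL Lr by simp
        qed
      qed
      show "\<forall>i j. i < j \<longrightarrow> j < length (rs @ [r]) \<longrightarrow> (e @ [y]) ! i \<le> (e @ [y]) ! j \<and>
          (e @ [y]) ! j + (rs @ [r]) ! i \<le> (e @ [y]) ! i + (rs @ [r]) ! j"
      proof (intro allI impI)
        fix i j assume ij: "i < j" and "j < length (rs @ [r])"
        then have "j < ?K \<or> j = ?K" by auto
        then show "(e @ [y]) ! i \<le> (e @ [y]) ! j \<and> (e @ [y]) ! j + (rs @ [r]) ! i \<le> (e @ [y]) ! i + (rs @ [r]) ! j"
        proof
          assume j: "j < ?K"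
          have i: "i < ?K" using ij j by simp
          show ?thesis using valid_mono[OF v ij j] valid_lip[OF v ij j] en[OF i] en[OF j] rn[OF i] rn[OF j] by simp
        next
          assume j: "j = ?K"
          have i: "i < ?K" using ij j by simp
          show ?thesis using toK[OF i] en[OF i] rn[OF i] j eK rK by simp
        qed
      qed
    qed
  qed
qed

lemma valid_single: "valid [r] e \<longleftrightarrow> (\<exists>y\<le>r. e = [y])"
proof
  assume v: "valid [r] e"
  then have "length e = 1" by (simp add: valid_len)
  then obtain y where e: "e = [y]" by (auto simp: length_Suc_conv)
  then have "y \<le> r" using valid_le[OF v, of 0] by simp
  then show "\<exists>y\<le>r. e = [y]" using e by blast
next
  assume "\<exists>y\<le>r. e = [y]"
  then obtain y where "y \<le> r" "e = [y]" by blast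
  then show "valid [r] e" by (simp add: valid_def)
qed

lemma card_valid:
  "rs \<noteq> [] \<Longrightarrow> sorted_wrt (<) rs \<Longrightarrow> finite {e. valid rs e} \<and>
     card {e. valid rs e} = (rs ! 0 + 1) * (\<Prod>i<length rs - 1. (rs ! (i + 1) - rs ! i + 1))"
proof (induction rs rule: rev_induct)
  case Nil
  then show ?case by simp
next
  case (snoc r rs)
  show ?case
  proof (cases "rs = []")
    case True
    have "{e. valid [r] e} = (\<lambda>y. [y]) ` {..r}" using valid_single by auto
    moreover have "inj (\<lambda>y::nat. [y])" by (simp add: inj_def)
    ultimately have "finite {e. valid [r] e} \<and> card {e. valid [r] e} = r + 1"
      by (simp add: card_image inj_on_def)
    then show ?thesis using True by simp
  next
    case False
    have s': "sorted_wrt (<) rs" using snoc.prems(2) by (simp add: sorted_wrt_append)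
    have IH: "finite {e. valid rs e}"
      "card {e. valid rs e} = (rs ! 0 + 1) * (\<Prod>i<length rs - 1. (rs ! (i + 1) - rs ! i + 1))"
      using snoc.IH[OF False s'] by blast+
    let ?K = "length rs" let ?L = "rs ! (length rs - 1)" let ?d = "r - ?L"
    let ?V = "{e. valid rs e}"
    let ?S = "SIGMA e:?V. {e ! (?K - 1) .. e ! (?K - 1) + ?d}"
    have eq: "{e. valid (rs @ [r]) e} = (\<lambda>(e, y). e @ [y]) ` ?S"
    proof (intro equalityI subsetI)
      fix e' assume "e' \<in> {e. valid (rs @ [r]) e}"
      then have v': "valid (rs @ [r]) e'" by simp
      have "length e' = Suc ?K" using valid_len[OF v'] by simp
      then have e': "e' = butlast e' @ [last e']"
        by (metis append_butlast_last_id list.size(3) nat.distinct(1))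
      then have "valid (rs @ [r]) (butlast e' @ [last e'])" using v' by simp
      then have "butlast e' \<in> ?V \<and> last e' \<in> {butlast e' ! (?K - 1) .. butlast e' ! (?K - 1) + ?d}"
        using valid_snoc[OF False snoc.prems(2)] by simp
      then show "e' \<in> (\<lambda>(e, y). e @ [y]) ` ?S" using e' by (intro image_eqI[of _ _ "(butlast e', last e')"]) auto
    next
      fix e' assume "e' \<in> (\<lambda>(e, y). e @ [y]) ` ?S"
      then obtain pr where pr: "pr \<in> ?S" "e' = (\<lambda>(e, y). e @ [y]) pr" by (rule imageE)
      obtain e y where "pr = (e, y)" by (cases pr)
      then have "e' = e @ [y]" "e \<in> ?V" "y \<in> {e ! (?K - 1) .. e ! (?K - 1) + ?d}" using pr by auto
      then show "e' \<in> {e. valid (rs @ [r]) e}" using valid_snoc[OF False snoc.prems(2)] by simp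
    qed
    have inj: "inj_on (\<lambda>(e, y). e @ [y]) ?S" by (auto simp: inj_on_def)
    have fS: "finite ?S" using IH(1) by simp
    have "card ?S = (\<Sum>e\<in>?V. card {e ! (?K - 1) .. e ! (?K - 1) + ?d})"
      using IH(1) by (simp add: card_SigmaI)
    also have "\<dots> = card ?V * (?d + 1)" by simp
    finally have cS: "card ?S = card ?V * (?d + 1)" .
    have fin: "finite {e. valid (rs @ [r]) e}" using eq fS by simp
    have c1: "card {e. valid (rs @ [r]) e} = card ?V * (?d + 1)"
      using eq card_image[OF inj] cS by simp
    have K: "0 < ?K" using False by simp
    have r0: "(rs @ [r]) ! 0 = rs ! 0" using K by (simp add: nth_append)
    obtain n where n: "?K = Suc n" using K by (cases "?K") auto
    have "(\<Prod>i<length (rs @ [r]) - 1. ((rs @ [r]) ! (i + 1) - (rs @ [r]) ! i + 1))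
        = (\<Prod>i<Suc n. ((rs @ [r]) ! (i + 1) - (rs @ [r]) ! i + 1))" using n by simp
    also have "\<dots> = (\<Prod>i<n. ((rs @ [r]) ! (i + 1) - (rs @ [r]) ! i + 1)) * ((rs @ [r]) ! (n + 1) - (rs @ [r]) ! n + 1)"
      by (rule prod.lessThan_Suc)
    also have "(\<Prod>i<n. ((rs @ [r]) ! (i + 1) - (rs @ [r]) ! i + 1)) = (\<Prod>i<n. (rs ! (i + 1) - rs ! i + 1))"
      by (rule prod.cong) (use n in \<open>auto simp: nth_append\<close>)
    also have "(rs @ [r]) ! (n + 1) - (rs @ [r]) ! n + 1 = ?d + 1" using n by (simp add: nth_append)
    finally have prodeq: "(\<Prod>i<length (rs @ [r]) - 1. ((rs @ [r]) ! (i + 1) - (rs @ [r]) ! i + 1))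
       = (\<Prod>i<?K - 1. (rs ! (i + 1) - rs ! i + 1)) * (?d + 1)" using n by simp
    have "card {e. valid (rs @ [r]) e} = card ?V * (?d + 1)" by (rule c1)
    also have "\<dots> = (rs ! 0 + 1) * (\<Prod>i<?K - 1. (rs ! (i + 1) - rs ! i + 1)) * (?d + 1)"
      by (simp only: IH(2))
    also have "\<dots> = ((rs @ [r]) ! 0 + 1) * (\<Prod>i<length (rs @ [r]) - 1. ((rs @ [r]) ! (i + 1) - (rs @ [r]) ! i + 1))"
      by (simp only: r0 prodeq mult.assoc)
    finally show ?thesis using fin by blast
  qed
qed

lemma orbit_le:
  assumes p: "prime p" and v: "valid rs e" and v': "valid rs e'"
    and O: "cano p rs e' \<in> aut_orbit (Gpr p rs) (cano p rs e)" and i: "i < length rs"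
  shows "e ! i \<le> e' ! i"
proof -
  have p0: "0 < p" using p prime_gt_0_nat by blast
  obtain f where f: "f \<in> auto (Gpr p rs)" and fe: "cano p rs e' = f (cano p rs e)"
    using O by (rule orbit_memE)
  have fh: "f \<in> hom (Gpr p rs) (Gpr p rs)" using f unfolding auto_def by (rule IntD1)
  have "inS p rs (e ! i) (rs ! i - e ! i) (cano p rs e)" by (rule cano_inS[OF p0 v i le_refl])
  then have "inS p rs (e ! i) (rs ! i - e ! i) (cano p rs e')" unfolding fe by (rule inS_hom[OF p0 fh])
  then show ?thesis by (rule inS_cano[OF p v' i valid_le[OF v i]])
qed

theorem proposition2:
  fixes p :: nat and rs :: "nat list"
  assumes "prime p"
    and "rs \<noteq> []"
    and "1 \<le> rs ! 0"
    and "sorted_wrt (<) rs"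
  shows "card (aut_orbits (Gpr p rs)) =
           (rs ! 0 + 1) * (\<Prod>i<length rs - 1. (rs ! (i + 1) - rs ! i + 1))"
proof -
  let ?G = "Gpr p rs" let ?V = "{e. valid rs e}"
  let ?O = "\<lambda>e. aut_orbit ?G (cano p rs e)"
  have p0: "0 < p" using assms(1) prime_gt_0_nat by blast
  have eq: "aut_orbits ?G = ?O ` ?V"
  proof (intro equalityI subsetI)
    fix X assume "X \<in> aut_orbits ?G"
    then obtain x where x: "x \<in> carrier ?G" and X: "X = aut_orbit ?G x" unfolding aut_orbits_def by blast
    have "X = ?O (Elist p rs x)" using X x_orbit[OF assms(1) assms(4) x] by simp
    moreover have "Elist p rs x \<in> ?V" using valid_E[OF assms(1) assms(4) x] by simp
    ultimately show "X \<in> ?O ` ?V" by (rule image_eqI)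
  next
    fix X assume "X \<in> ?O ` ?V"
    then obtain e where "X = ?O e" by blast
    then show "X \<in> aut_orbits ?G" unfolding aut_orbits_def using cano_carrier[OF p0] by blast
  qed
  have inj: "inj_on ?O ?V"
  proof (rule inj_onI)
    fix e e' assume e: "e \<in> ?V" and e': "e' \<in> ?V" and Oe: "?O e = ?O e'"
    have v: "valid rs e" and v': "valid rs e'" using e e' by simp_all
    have id: "(\<lambda>x\<in>carrier ?G. x) \<in> auto ?G" by (rule id_auto[OF p0])
    have m1: "cano p rs e' \<in> ?O e'" by (rule orbit_memI[OF id]) (simp add: cano_carrier[OF p0])
    have m2: "cano p rs e \<in> ?O e" by (rule orbit_memI[OF id]) (simp add: cano_carrier[OF p0])
    have "cano p rs e' \<in> ?O e" using m1 Oe by simp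
    then have le1: "\<And>i. i < length rs \<Longrightarrow> e ! i \<le> e' ! i" using orbit_le[OF assms(1) v v'] by blast
    have "cano p rs e \<in> ?O e'" using m2 Oe by simp
    then have le2: "\<And>i. i < length rs \<Longrightarrow> e' ! i \<le> e ! i" using orbit_le[OF assms(1) v' v] by blast
    show "e = e'"
    proof (rule nth_equalityI)
      show "length e = length e'" using valid_len[OF v] valid_len[OF v'] by simp
      fix i assume "i < length e"
      then have "i < length rs" using valid_len[OF v] by simp
      then show "e ! i = e' ! i" using le1 le2 by (simp add: le_antisym)
    qed
  qed
  have "card (aut_orbits ?G) = card ?V" using eq card_image[OF inj] by simp
  also have "\<dots> = (rs ! 0 + 1) * (\<Prod>i<length rs - 1. (rs ! (i + 1) - rs ! i + 1))"
    using card_valid[OF assms(2) assms(4)] by blast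
  finally show ?thesis .
qed

end
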